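(* Let $d,N\ge1$, $\epsilon\in(0,1]$, $\delta\in[0,1]$, $\beta\in(0,1/2]$ with $N\ge d\ln(2d/\beta)$, and let $k=\max\{1,\min\{d,\lfloor\epsilon/2.17\rfloor\}\}$. Let $x(1),\dots,x(N)\in[-1,1]^d$ and let $x^*(i)$ be obtained by applying Algorithm 3 (parameters $\epsilon,\delta,k$) independently to each $x(i)$. For $j\in\{1,\dots,d\}$ put $Z_j=\frac1N\sum_{i=1}^Nx^*_j(i)$ and $X_j=\frac1N\sum_{i=1}^Nx_j(i)$. Then with probability at least $1-\beta$, $$\max_{j\in\{1,\dots,d\}}|Z_j-X_j|=O\!\left(\frac{\sqrt{d\log(d/\beta)}}{(\epsilon+2\delta)\sqrt N}\right),$$ where the implied constant is absolute.
   Context: Algorithm 2 with parameters $\epsilon'>0,\delta'\in[0,1]$: let $B_1=\frac{e^{\epsilon'}+1}{e^{\epsilon'}+2\delta'-1}$; on input $y\in[-1,1]$ it outputs $B_1$ with probability $\frac{e^{\epsilon'}+2\delta'-1}{2(e^{\epsilon'}+1)}y+\frac12$ and $-B_1$ otherwise. Algorithm 3 with parameters $\epsilon>0$, $\delta\ge0$ and $k\in\{1,\dots,d\}$: on input $x\in[-1,1]^d$, set $x^*=(0,\dots,0)$, choose a uniformly random $k$-element subset $S\subseteq\{1,\dots,d\}$, and for each $j\in S$ apply Algorithm 2 with parameters $\epsilon/k,\delta/k$ to $x_j$ to obtain $\bar x_j$ (independently over $j$) and set $x^*_j=\frac dk\bar x_j$; output $x^*$. *)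

theory Defs
  imports "HOL-Probability.Probability"
begin

definition alg2_B :: "real \<Rightarrow> real \<Rightarrow> real" where
  "alg2_B eps' del' = (exp eps' + 1) / (exp eps' + 2 * del' - 1)"

definition alg2 :: "real \<Rightarrow> real \<Rightarrow> real \<Rightarrow> real pmf" where
  "alg2 eps' del' y =
     map_pmf (\<lambda>b. if b then alg2_B eps' del' else - alg2_B eps' del')
       (bernoulli_pmf ((exp eps' + 2 * del' - 1) / (2 * (exp eps' + 1)) * y + 1 / 2))"

text \<open>Algorithm 3 on x in [-1,1]^d; coordinates are indexed by {1..d}, and the
  output vector is 0 outside the sampled k-subset S (and outside {1..d}).\<close>
definition alg3 :: "real \<Rightarrow> real \<Rightarrow> nat \<Rightarrow> nat \<Rightarrow> (nat \<Rightarrow> real) \<Rightarrow> (nat \<Rightarrow> real) pmf" where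
  "alg3 eps del k d x =
     do {
       S \<leftarrow> pmf_of_set {S. S \<subseteq> {1..d} \<and> card S = k};
       xbar \<leftarrow> Pi_pmf S 0 (\<lambda>j. alg2 (eps / real k) (del / real k) (x j));
       return_pmf (\<lambda>j. if j \<in> S then real d / real k * xbar j else 0)
     }"

definition kpar :: "nat \<Rightarrow> real \<Rightarrow> nat" where
  "kpar d eps = max 1 (min d (nat \<lfloor>eps / 2.17\<rfloor>))"

definition alg3_all :: "real \<Rightarrow> real \<Rightarrow> nat \<Rightarrow> nat \<Rightarrow> (nat \<Rightarrow> nat \<Rightarrow> real) \<Rightarrow> (nat \<Rightarrow> nat \<Rightarrow> real) pmf" where
  "alg3_all eps del d N x = Pi_pmf {1..N} (\<lambda>_. 0) (\<lambda>i. alg3 eps del (kpar d eps) d (x i))"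

end

theory Submission
  imports Defs
begin

definition alg2_p :: "real \<Rightarrow> real \<Rightarrow> real \<Rightarrow> real" where
  "alg2_p e dl y = (exp e + 2 * dl - 1) / (2 * (exp e + 1)) * y + 1 / 2"

theorem theorem4:
  shows "\<exists>C>0. \<forall>(d::nat) (N::nat) (eps::real) (del::real) (\<beta>::real) (x :: nat \<Rightarrow> nat \<Rightarrow> real).
     d \<ge> 1 \<longrightarrow> N \<ge> 1 \<longrightarrow> 0 < eps \<longrightarrow> eps \<le> 1 \<longrightarrow> 0 \<le> del \<longrightarrow> del \<le> 1 \<longrightarrow>
     0 < \<beta> \<longrightarrow> \<beta> \<le> 1/2 \<longrightarrow> real N \<ge> real d * ln (2 * real d / \<beta>) \<longrightarrow>
     (\<forall>i\<in>{1..N}. \<forall>j\<in>{1..d}. \<bar>x i j\<bar> \<le> 1) \<longrightarrow>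
     measure_pmf.prob (alg3_all eps del d N x)
       {xs. Max ((\<lambda>j. \<bar>(\<Sum>i=1..N. xs i j) / real N - (\<Sum>i=1..N. x i j) / real N\<bar>) ` {1..d})
              \<le> C * sqrt (real d * ln (real d / \<beta>)) / ((eps + 2 * del) * sqrt (real N))}
       \<ge> 1 - \<beta>"
proof -
  have kpar_1: "kpar d eps = 1" if "0 < eps" "eps \<le> 1" for d :: nat and eps :: real
  proof -
    have "\<lfloor>eps / 2.17\<rfloor> = 0" using that by (intro floor_unique) auto
    then show ?thesis by (simp add: kpar_def)
  qed

  have exp_le_quad: "exp u \<le> 1 + u + u^2" if assms: "\<bar>u\<bar> \<le> 1" for u :: real
  proof (cases "u \<ge> 0")
    case True then show ?thesis using exp_bound[of u] assms by auto
  next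
    case False
    define t where "t = - u"
    have t: "0 \<le> t" "t \<le> 1" using False assms by (auto simp: t_def)
    have e: "1 + t + t^2/2 \<le> exp t" using exp_lower_Taylor_quadratic t by simp
    have eq: "(1 - t + t^2) * (1 + t + t^2/2) = 1 + t^2/2 + t^3/2 + t^4/2"
      by (simp add: field_simps power2_eq_square power3_eq_cube power4_eq_xxxx)
    have "1 \<le> (1 - t + t^2) * (1 + t + t^2/2)"
      unfolding eq using t by simp
    also have "\<dots> \<le> (1 - t + t^2) * exp t"
    proof (rule mult_left_mono[OF e])
      have "0 \<le> (t - 1/2)^2 + 3/4" by simp
      also have "\<dots> = 1 - t + t^2" by (simp add: power2_eq_square algebra_simps)
      finally show "0 \<le> 1 - t + t^2" .
    qed
    finally have "exp (-t) \<le> 1 - t + t^2"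
      by (simp add: exp_minus field_simps)
    then show ?thesis by (simp add: t_def)
  qed

  have alg3_k1: "alg3 eps del 1 d x = bind_pmf (pmf_of_set {1..d})
           (\<lambda>s. map_pmf (\<lambda>a j. if j = s then real d * a else 0) (alg2 eps del (x s)))"
    if assms: "d \<ge> 1" for eps del :: real and d :: nat and x :: "nat \<Rightarrow> real"
  proof -
    have SS: "{S. S \<subseteq> {1..d} \<and> card S = 1} = (\<lambda>s. {s}) ` {1..d}"
      by (auto simp: card_1_singleton_iff)
    have pm: "pmf_of_set {S. S \<subseteq> {1..d} \<and> card S = 1} = map_pmf (\<lambda>s. {s}) (pmf_of_set {1..d})"
      unfolding SS using assms by (subst map_pmf_of_set_inj) (auto simp: inj_on_def)
    show ?thesis
      unfolding alg3_def pm bind_map_pmf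
    proof (intro bind_pmf_cong refl)
      fix s
      show "Pi_pmf {s} 0 (\<lambda>j. alg2 (eps / real 1) (del / real 1) (x j)) \<bind>
            (\<lambda>xbar. return_pmf (\<lambda>j. if j \<in> {s} then real d / real 1 * xbar j else 0)) =
            map_pmf (\<lambda>a j. if j = s then real d * a else 0) (alg2 eps del (x s))"
        apply (simp add: Pi_pmf_singleton bind_map_pmf map_pmf_def bind_assoc_pmf bind_return_pmf)
        apply (intro bind_pmf_cong refl arg_cong[of _ _ return_pmf])
        apply (auto simp: fun_eq_iff)
        done
    qed
  qed

  have finite_alg2: "finite (set_pmf (alg2 e dl y))" for e dl y :: real
    unfolding alg2_def by simp

  have finite_alg3: "finite (set_pmf (alg3 eps del 1 d x))" if assms: "d \<ge> 1" for eps del :: real and d :: nat and x :: "nat \<Rightarrow> real"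
  proof -
    have "finite (\<Union>s\<in>{1..d}. (\<lambda>a j. if j = s then real d * a else 0) ` set_pmf (alg2 eps del (x s)))"
      by (intro finite_UN_I) (auto simp: finite_alg2)
    then show ?thesis using assms by (subst alg3_k1[OF assms]) simp
  qed

  have expectation_bind_pmf_of_set: "measure_pmf.expectation (bind_pmf (pmf_of_set A) K) f
       = (\<Sum>s\<in>A. measure_pmf.expectation (K s) f) / card A"
    if A: "finite A" "A \<noteq> {}" and K: "\<And>s. s \<in> A \<Longrightarrow> finite (set_pmf (K s))"
    and f: "\<And>y. 0 \<le> f y"
    for A :: "nat set" and K :: "nat \<Rightarrow> (nat \<Rightarrow> real) pmf" and f :: "(nat \<Rightarrow> real) \<Rightarrow> real"
  proof -
    have fin: "finite (set_pmf (bind_pmf (pmf_of_set A) K))" using A K by simp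
    have nn: "0 \<le> measure_pmf.expectation (K s) f" for s
      by (intro Bochner_Integration.integral_nonneg f)
    have "ennreal (measure_pmf.expectation (bind_pmf (pmf_of_set A) K) f)
        = (\<integral>\<^sup>+y. ennreal (f y) \<partial>bind_pmf (pmf_of_set A) K)"
      by (rule nn_integral_eq_integral[symmetric]) (auto intro: integrable_measure_pmf_finite[OF fin] f)
    also have "\<dots> = (\<integral>\<^sup>+s. (\<integral>\<^sup>+y. ennreal (f y) \<partial>K s) \<partial>pmf_of_set A)" by simp
    also have "\<dots> = (\<integral>\<^sup>+s. ennreal (measure_pmf.expectation (K s) f) \<partial>pmf_of_set A)"
      by (intro nn_integral_cong_AE AE_pmfI nn_integral_eq_integral)
         (use A K in \<open>auto intro: integrable_measure_pmf_finite f\<close>)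
    also have "\<dots> = ennreal (\<integral>s. measure_pmf.expectation (K s) f \<partial>pmf_of_set A)"
    proof (rule nn_integral_eq_integral)
      have "set_pmf (pmf_of_set A) = A" using A by simp
      then show "integrable (measure_pmf (pmf_of_set A)) (\<lambda>s. measure_pmf.expectation (K s) f)"
        using A by (intro integrable_measure_pmf_finite) simp
    qed (auto intro: nn)
    also have "\<dots> = ennreal ((\<Sum>s\<in>A. measure_pmf.expectation (K s) f) / card A)"
      using A by (simp add: integral_pmf_of_set)
    finally show ?thesis
      by (subst (asm) ennreal_inj) (auto intro!: Bochner_Integration.integral_nonneg f sum_nonneg nn divide_nonneg_nonneg)
  qed

  have alg2_alt: "alg2 e dl y = map_pmf (\<lambda>b. if b then alg2_B e dl else - alg2_B e dl) (bernoulli_pmf (alg2_p e dl y))" for e dl y :: real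
    by (simp add: alg2_def alg2_p_def)

  have alg2_p_facts: "0 \<le> alg2_p e dl y" "alg2_p e dl y \<le> 1" "alg2_B e dl * (2 * alg2_p e dl y - 1) = y"
    "1 \<le> alg2_B e dl"
    if assms: "0 < e" "0 \<le> dl" "dl \<le> 1" "\<bar>y\<bar> \<le> 1" for e dl y :: real
  proof -
    define r where "r = (exp e + 2 * dl - 1) / (exp e + 1)"
    have e1: "exp e > 1" using assms by simp
    have e2: "1 + e \<le> exp e" by simp
    have den: "exp e + 2 * dl - 1 > 0" using e1 assms by linarith
    have pos: "0 < exp e + 1" using exp_gt_zero[of e] by linarith
    then have r0: "0 < r" unfolding r_def using den by (intro divide_pos_pos)
    have r1: "r \<le> 1" using assms pos by (simp add: r_def divide_le_eq_1)
    have "\<bar>r * y\<bar> \<le> 1" using r0 r1 assms by (simp add: abs_mult mult_le_one)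
    moreover have p: "alg2_p e dl y = r * y / 2 + 1/2" by (simp add: alg2_p_def r_def)
    ultimately show "0 \<le> alg2_p e dl y" "alg2_p e dl y \<le> 1" by auto
    have "alg2_B e dl * r = 1" using den pos by (simp add: alg2_B_def r_def)
    then show "alg2_B e dl * (2 * alg2_p e dl y - 1) = y" unfolding p
      by (simp add: algebra_simps)
    show "1 \<le> alg2_B e dl" using den assms by (simp add: alg2_B_def)
  qed

  have alg2_B_bound: "alg2_B e dl * (e + 2 * dl) \<le> 4"
    if assms: "0 < e" "e \<le> 1" "0 \<le> dl" "dl \<le> 1" for e dl :: real
  proof -
    have e1: "exp e > 1" using assms by simp
    have e2: "1 + e \<le> exp e" by simp
    have den: "exp e + 2 * dl - 1 > 0" using e1 assms by linarith
    have "exp e \<le> exp 1" using assms by simp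
    also have "exp (1::real) \<le> 3" using exp_le by simp
    finally have "exp e + 1 \<le> 4" by simp
    moreover have "e + 2 * dl \<le> exp e + 2 * dl - 1" using e2 by linarith
    ultimately have "(exp e + 1) * (e + 2 * dl) \<le> 4 * (exp e + 2 * dl - 1)"
      using assms by (intro mult_mono) auto
    then show "alg2_B e dl * (e + 2 * dl) \<le> 4" using den
      by (simp add: alg2_B_def field_simps)
  qed

  have user_expect: "measure_pmf.expectation (alg3 eps del 1 d x) (\<lambda>v. g (v j))
    = (g (real d * alg2_B eps del) * alg2_p eps del (x j)
       + g (- (real d * alg2_B eps del)) * (1 - alg2_p eps del (x j)) + (real d - 1) * g 0) / real d"
    if d: "d \<ge> 1" and j: "j \<in> {1..d}" and eps: "0 < eps" and del: "0 \<le> del" "del \<le> 1"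
    and x: "\<And>s. s \<in> {1..d} \<Longrightarrow> \<bar>x s\<bar> \<le> 1" and g: "\<And>z. 0 \<le> g z"
    for g :: "real \<Rightarrow> real" and d j :: nat and eps del :: real and x :: "nat \<Rightarrow> real"
  proof -
    define T where "T s = measure_pmf.expectation
       (map_pmf (\<lambda>a j. if j = s then real d * a else 0) (alg2 eps del (x s))) (\<lambda>v. g (v j))" for s
    have T: "T s = (if s = j then g (real d * alg2_B eps del) * alg2_p eps del (x j)
         + g (- (real d * alg2_B eps del)) * (1 - alg2_p eps del (x j)) else g 0)" if s: "s \<in> {1..d}" for s
      using alg2_p_facts(1,2)[OF eps del x[OF s]]
      by (auto simp: T_def alg2_alt algebra_simps)
    have "measure_pmf.expectation (alg3 eps del 1 d x) (\<lambda>v. g (v j)) = (\<Sum>s\<in>{1..d}. T s) / card {1..d}"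
      unfolding alg3_k1[OF d] T_def
      by (rule expectation_bind_pmf_of_set) (use d in \<open>auto simp: finite_alg2 g\<close>)
    also have "(\<Sum>s\<in>{1..d}. T s) = T j + (\<Sum>s\<in>{1..d}-{j}. T s)"
      using j by (simp add: sum.remove)
    also have "(\<Sum>s\<in>{1..d}-{j}. T s) = (\<Sum>s\<in>{1..d}-{j}. g 0)"
      by (intro sum.cong) (auto simp: T)
    also have "\<dots> = (real d - 1) * g 0" using j d by (simp add: of_nat_diff)
    finally show ?thesis using T[OF j] by simp
  qed

  have mgf3: "w1 * exp (l * (z1 - y)) + w2 * exp (l * (z2 - y)) + w3 * exp (l * (z3 - y)) \<le> exp (l^2 * V)"
    if w: "0 \<le> w1" "0 \<le> w2" "0 \<le> w3" "w1 + w2 + w3 = 1"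
    and m: "w1 * z1 + w2 * z2 + w3 * z3 = y"
    and v: "w1 * z1^2 + w2 * z2^2 + w3 * z3^2 \<le> V"
    and b: "\<bar>l * (z1 - y)\<bar> \<le> 1" "\<bar>l * (z2 - y)\<bar> \<le> 1" "\<bar>l * (z3 - y)\<bar> \<le> 1"
    for w1 w2 w3 z1 z2 z3 y l V :: real
  proof -
    let ?q = "\<lambda>u::real. 1 + u + u^2"
    have "w1 * exp (l * (z1 - y)) + w2 * exp (l * (z2 - y)) + w3 * exp (l * (z3 - y))
        \<le> w1 * ?q (l * (z1 - y)) + w2 * ?q (l * (z2 - y)) + w3 * ?q (l * (z3 - y))"
      using w b by (intro add_mono mult_left_mono exp_le_quad) auto
    also have "\<dots> = (w1 + w2 + w3) + l * ((w1 * z1 + w2 * z2 + w3 * z3) - (w1 + w2 + w3) * y)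
        + l^2 * ((w1 * z1^2 + w2 * z2^2 + w3 * z3^2) - 2 * y * (w1 * z1 + w2 * z2 + w3 * z3) + (w1 + w2 + w3) * y^2)"
      by (simp add: algebra_simps power2_eq_square)
    also have "\<dots> = 1 + l^2 * ((w1 * z1^2 + w2 * z2^2 + w3 * z3^2) - y^2)"
      unfolding w(4) m by (simp add: power2_eq_square)
    also have "\<dots> \<le> 1 + l^2 * V"
    proof -
      have "w1 * z1^2 + w2 * z2^2 + w3 * z3^2 - y^2 \<le> V" using v zero_le_power2[of y] by linarith
      then show ?thesis by (intro add_left_mono mult_left_mono) auto
    qed
    also have "\<dots> \<le> exp (l^2 * V)" by (rule exp_ge_add_one_self[unfolded add.commute[of 1]] | simp add: add.commute)
    finally show ?thesis .
  qed

  have user_mgf: "measure_pmf.expectation (alg3 eps del 1 d x) (\<lambda>v. exp (l * (v j - x j)))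
         \<le> exp (l^2 * (real d * (alg2_B eps del)^2))"
    if d: "d \<ge> 1" and j: "j \<in> {1..d}" and eps: "0 < eps" and del: "0 \<le> del" "del \<le> 1"
    and x: "\<And>s. s \<in> {1..d} \<Longrightarrow> \<bar>x s\<bar> \<le> 1"
    and l: "\<bar>l\<bar> * (real d * alg2_B eps del + 1) \<le> 1"
    for d j :: nat and eps del l :: real and x :: "nat \<Rightarrow> real"
  proof -
    define B where "B = alg2_B eps del"
    define p where "p = alg2_p eps del (x j)"
    have p01: "0 \<le> p" "p \<le> 1" and Bp: "B * (2 * p - 1) = x j" and B1: "1 \<le> B"
      using alg2_p_facts[OF eps del x[OF j]] by (auto simp: B_def p_def)
    have dpos: "real d > 0" using d by simp
    have E: "measure_pmf.expectation (alg3 eps del 1 d x) (\<lambda>v. exp (l * (v j - x j)))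
       = (p / d) * exp (l * (real d * B - x j)) + ((1 - p) / d) * exp (l * (- (real d * B) - x j))
         + ((real d - 1) / d) * exp (l * (0 - x j))"
      by (subst user_expect[where x = x and g = "\<lambda>z. exp (l * (z - x j))", OF d j eps del x])
         (use dpos in \<open>simp_all add: B_def p_def field_simps\<close>)
    have xj: "\<bar>x j\<bar> \<le> 1" using x[OF j] .
    have bnd: "\<bar>l * (z - x j)\<bar> \<le> 1" if "\<bar>z\<bar> \<le> real d * B" for z
    proof -
      have "\<bar>z - x j\<bar> \<le> real d * B + 1" using that xj by linarith
      then have "\<bar>l\<bar> * \<bar>z - x j\<bar> \<le> \<bar>l\<bar> * (real d * B + 1)" by (intro mult_left_mono) auto
      then show ?thesis using l by (simp add: abs_mult B_def)
    qed
    have "(p / d) * exp (l * (real d * B - x j)) + ((1 - p) / d) * exp (l * (- (real d * B) - x j))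
         + ((real d - 1) / d) * exp (l * (0 - x j)) \<le> exp (l^2 * (real d * B^2))"
    proof (rule mgf3)
      show "0 \<le> p / real d" "0 \<le> (1 - p) / real d" "0 \<le> (real d - 1) / real d"
        using p01 d by auto
      show "p / real d + (1 - p) / real d + (real d - 1) / real d = 1"
        using dpos by (simp add: field_simps)
      have "p / real d * (real d * B) + (1 - p) / real d * - (real d * B) + (real d - 1) / real d * 0
         = B * (2 * p - 1)" using dpos by (simp add: field_simps)
      then show "p / real d * (real d * B) + (1 - p) / real d * - (real d * B) + (real d - 1) / real d * 0 = x j"
        using Bp by simp
      show "p / real d * (real d * B)^2 + (1 - p) / real d * (- (real d * B))^2 + (real d - 1) / real d * 0^2
            \<le> real d * B^2"
        using dpos by (simp add: field_simps power2_eq_square)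
      have dB: "0 \<le> real d * B" using B1 dpos by simp
      show "\<bar>l * (real d * B - x j)\<bar> \<le> 1" by (rule bnd) (use dB in simp)
      show "\<bar>l * (- (real d * B) - x j)\<bar> \<le> 1" by (rule bnd) (use dB in simp)
      show "\<bar>l * (0 - x j)\<bar> \<le> 1" by (rule bnd) (use dB in simp)
    qed
    then show ?thesis using E by (simp add: B_def)
  qed

  have tail_one: "measure_pmf.prob (alg3_all eps del d N x) {xs. t \<le> l * (\<Sum>i=1..N. xs i j - x i j)}
         \<le> exp (real N * (l^2 * (real d * (alg2_B eps del)^2)) - t)"
    if d: "d \<ge> 1" and j: "j \<in> {1..d}" and eps: "0 < eps" "eps \<le> 1" and del: "0 \<le> del" "del \<le> 1"
    and x: "\<And>i s. i \<in> {1..N} \<Longrightarrow> s \<in> {1..d} \<Longrightarrow> \<bar>x i s\<bar> \<le> 1"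
    and l: "\<bar>l\<bar> * (real d * alg2_B eps del + 1) \<le> 1"
    for d j N :: nat and eps del l t :: real and x :: "nat \<Rightarrow> nat \<Rightarrow> real"
  proof -
    define V where "V = real d * (alg2_B eps del)^2"
    define M where "M = alg3_all eps del d N x"
    have M: "M = Pi_pmf {1..N} (\<lambda>_. 0) (\<lambda>i. alg3 eps del 1 d (x i))"
      by (simp add: M_def alg3_all_def kpar_1[OF eps])
    define u where "u xs = (\<Prod>i\<in>{1..N}. exp (l * (xs i j - x i j)))" for xs :: "nat \<Rightarrow> nat \<Rightarrow> real"
    have u_eq: "u xs = exp (l * (\<Sum>i=1..N. xs i j - x i j))" for xs
      by (simp add: u_def exp_sum sum_distrib_left)
    have int1: "integrable (measure_pmf (alg3 eps del 1 d (x i))) (\<lambda>v. exp (l * (v j - x i j)))" for i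
      by (rule integrable_measure_pmf_finite) (rule finite_alg3[OF d])
    have intu: "integrable (measure_pmf M) u"
      unfolding M u_def by (rule integrable_prod_Pi_pmf[where f = "\<lambda>i v. exp (l * (v j - x i j))"]) (simp, rule int1)
    have Eu: "measure_pmf.expectation M u = (\<Prod>i\<in>{1..N}. measure_pmf.expectation (alg3 eps del 1 d (x i)) (\<lambda>v. exp (l * (v j - x i j))))"
      unfolding M u_def by (rule expectation_prod_Pi_pmf) (auto intro: int1[simplified])
    also have "\<dots> \<le> (\<Prod>i\<in>{1..N}. exp (l^2 * V))"
    proof (rule prod_mono)
      fix i assume i: "i \<in> {1..N}"
      show "0 \<le> measure_pmf.expectation (alg3 eps del 1 d (x i)) (\<lambda>v. exp (l * (v j - x i j))) \<and>
            measure_pmf.expectation (alg3 eps del 1 d (x i)) (\<lambda>v. exp (l * (v j - x i j))) \<le> exp (l^2 * V)"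
        unfolding V_def
        by (intro conjI Bochner_Integration.integral_nonneg user_mgf[OF d j eps(1) del _ l])
           (auto intro: x[OF i])
    qed
    also have "\<dots> = exp (real N * (l^2 * V))" by (simp add: exp_of_nat_mult)
    finally have Eu': "measure_pmf.expectation M u \<le> exp (real N * (l^2 * V))" .
    have unn: "0 \<le> u xs" for xs by (simp add: u_def prod_nonneg)
    have "{xs. t \<le> l * (\<Sum>i=1..N. xs i j - x i j)} = {xs \<in> space (measure_pmf M). exp t \<le> u xs}"
      by (auto simp: u_eq)
    then have "measure_pmf.prob M {xs. t \<le> l * (\<Sum>i=1..N. xs i j - x i j)} \<le> measure_pmf.expectation M u / exp t"
      using integral_Markov_inequality_measure[OF intu, of UNIV "exp t"]
      using unn by simp
    also have "\<dots> \<le> exp (real N * (l^2 * V)) / exp t"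
      by (intro divide_right_mono Eu') auto
    also have "\<dots> = exp (real N * (l^2 * V) - t)" by (simp add: exp_diff)
    finally show ?thesis by (simp add: M_def V_def)
  qed

  show ?thesis
  proof (intro exI[of _ 20] conjI allI impI)
    show "(0::real) < 20" by simp
    fix d N :: nat and eps del \<beta> :: real and x :: "nat \<Rightarrow> nat \<Rightarrow> real"
    assume d: "d \<ge> 1" and N: "N \<ge> 1" and eps: "0 < eps" "eps \<le> 1" and del: "0 \<le> del" "del \<le> 1"
      and \<beta>: "0 < \<beta>" "\<beta> \<le> 1/2" and NL: "real N \<ge> real d * ln (2 * real d / \<beta>)"
      and xb: "\<forall>i\<in>{1..N}. \<forall>j\<in>{1..d}. \<bar>x i j\<bar> \<le> 1"
    have x: "\<And>i s. i \<in> {1..N} \<Longrightarrow> s \<in> {1..d} \<Longrightarrow> \<bar>x i s\<bar> \<le> 1" using xb by auto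
    define B where "B = alg2_B eps del"
    define V where "V = real d * B^2"
    define L where "L = ln (2 * real d / \<beta>)"
    define lam where "lam = sqrt (L / (4 * real N * V))"
    define T where "T = 3 * sqrt (real N * V * L)"
    define S where "S xs j = (\<Sum>i=1..N. xs i j - x i j)" for xs :: "nat \<Rightarrow> nat \<Rightarrow> real" and j
    define M where "M = alg3_all eps del d N x"
    define bound where "bound = 20 * sqrt (real d * ln (real d / \<beta>)) / ((eps + 2 * del) * sqrt (real N))"
    have B1: "1 \<le> B" using alg2_p_facts(4)[OF eps(1) del, of 0] by (simp add: B_def)
    have B4: "B * (eps + 2 * del) \<le> 4" using alg2_B_bound[OF eps del] by (simp add: B_def)
    have dpos: "real d > 0" and Npos: "real N > 0" using d N by auto
    have Vpos: "V > 0" using B1 dpos by (simp add: V_def)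
    have db2: "real d / \<beta> \<ge> 2" using \<beta> dpos d by (simp add: field_simps)
    have Lpos: "L > 0"
    proof -
      have "1 < 2 * (real d / \<beta>)" using db2 by linarith
      then have "1 < 2 * real d / \<beta>" by simp
      then show ?thesis unfolding L_def by simp
    qed
    have L2: "L \<le> 2 * ln (real d / \<beta>)"
    proof -
      have "L = ln (2 * (real d / \<beta>))" unfolding L_def by simp
      also have "\<dots> = ln 2 + ln (real d / \<beta>)" using dpos \<beta> by (intro ln_mult_pos) auto
      finally have "L = ln 2 + ln (real d / \<beta>)" .
      moreover have "ln 2 \<le> ln (real d / \<beta>)" using db2 by simp
      ultimately show ?thesis by simp
    qed
    have lam0: "lam > 0" unfolding lam_def using Lpos Vpos Npos by simp
    have lam2: "lam^2 = L / (4 * real N * V)" unfolding lam_def using Lpos Vpos Npos by simp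
    have lamT: "lam * T = 3 / 2 * L"
    proof -
      have "lam * T = 3 * (sqrt (L / (4 * real N * V)) * sqrt (real N * V * L))"
        by (simp add: lam_def T_def)
      also have "\<dots> = 3 * sqrt (L / (4 * real N * V) * (real N * V * L))"
        by (simp only: real_sqrt_mult)
      also have "L / (4 * real N * V) * (real N * V * L) = (L / 2)^2"
        using Vpos Npos by (simp add: field_simps power2_eq_square)
      also have "sqrt ((L / 2)^2) = L / 2" using Lpos by simp
      finally show ?thesis by simp
    qed
    have lamB: "lam * (real d * B + 1) \<le> 1"
    proof -
      have "(lam * (2 * real d * B))^2 = lam^2 * (4 * real d * V)"
        by (simp add: V_def power2_eq_square algebra_simps)
      also have "\<dots> = L / (4 * real N * V) * (4 * real d * V)" by (simp add: lam2)
      also have "\<dots> = real d * L / real N" using Vpos Npos by (simp add: field_simps)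
      also have "\<dots> \<le> 1" using NL Npos by (simp add: L_def field_simps)
      finally have sq: "(lam * (2 * real d * B))^2 \<le> 1^2" by simp
      have "lam * (2 * real d * B) \<le> 1"
        by (rule power2_le_imp_le[OF sq]) simp
      moreover have "1 \<le> real d * B" using B1 d mult_mono[of 1 "real d" 1 B] by simp
      then have "real d * B + 1 \<le> 2 * real d * B" by linarith
      ultimately show ?thesis using lam0
        by (meson mult_left_mono less_imp_le order_trans)
    qed
    define Bad where "Bad = (\<Union>p\<in>{1..d} \<times> {-1::real, 1}. {xs. lam * T \<le> (snd p * lam) * S xs (fst p)})"
    have tail: "measure_pmf.prob M {xs. lam * T \<le> (sg * lam) * S xs j} \<le> \<beta> / (2 * real d)"
      if j: "j \<in> {1..d}" and sg: "sg \<in> {-1, 1}" for j sg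
    proof -
      have sl: "\<bar>sg * lam\<bar> * (real d * alg2_B eps del + 1) \<le> 1"
        using sg lamB lam0 by (auto simp: B_def abs_mult)
      have "measure_pmf.prob M {xs. lam * T \<le> (sg * lam) * S xs j}
          \<le> exp (real N * ((sg * lam)^2 * (real d * (alg2_B eps del)^2)) - lam * T)"
        unfolding M_def S_def by (rule tail_one[OF d j eps del x sl])
      also have "real N * ((sg * lam)^2 * (real d * (alg2_B eps del)^2)) = L / 4"
        using sg Vpos Npos by (auto simp: power_mult_distrib lam2 V_def[symmetric] B_def[symmetric] field_simps)
      also have "exp (L / 4 - lam * T) \<le> exp (- L)" using lamT Lpos by simp
      also have "exp (- L) = inverse (2 * real d / \<beta>)"
        unfolding L_def exp_minus using dpos \<beta> by (subst exp_ln) auto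
      also have "\<dots> = \<beta> / (2 * real d)" by simp
      finally show ?thesis .
    qed
    have probBad: "measure_pmf.prob M Bad \<le> \<beta>"
    proof -
      have "measure_pmf.prob M Bad \<le> (\<Sum>p\<in>{1..d} \<times> {-1::real, 1}. measure_pmf.prob M {xs. lam * T \<le> (snd p * lam) * S xs (fst p)})"
        unfolding Bad_def by (rule measure_pmf.finite_measure_subadditive_finite) auto
      also have "\<dots> \<le> (\<Sum>p\<in>{1..d} \<times> {-1::real, 1}. \<beta> / (2 * real d))"
        by (intro sum_mono) (auto intro!: tail)
      also have "\<dots> = \<beta>" using dpos by (simp add: card_cartesian_product)
      finally show ?thesis .
    qed
    have Tb: "T / real N \<le> bound"
    proof -
      have sq: "sqrt (real d * L) \<le> sqrt 2 * sqrt (real d * ln (real d / \<beta>))"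
        unfolding real_sqrt_mult[symmetric] using L2 dpos by (intro real_sqrt_le_mono) (simp add: field_simps)
      have s2: "sqrt 2 \<le> (5/3::real)" by (rule real_le_lsqrt) (auto simp: power2_eq_square)
      have "T / real N = 3 * B * sqrt (real d * L) / sqrt (real N)"
      proof -
        have "sqrt (real N * V * L) = sqrt (real N) * B * sqrt (real d * L)"
          using B1 by (simp add: V_def real_sqrt_mult mult_ac)
        moreover have "real N = sqrt (real N) * sqrt (real N)" using Npos by simp
        ultimately show ?thesis unfolding T_def using Npos
          by (simp add: field_simps)
      qed
      also have "\<dots> \<le> 20 * sqrt (real d * ln (real d / \<beta>)) / ((eps + 2 * del) * sqrt (real N))"
      proof -
        have ep: "eps + 2 * del > 0" using eps del by simp
        have "3 * B * sqrt (real d * L) * (eps + 2 * del) = 3 * (B * (eps + 2 * del)) * sqrt (real d * L)"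
          by simp
        also have "\<dots> \<le> 3 * 4 * (sqrt 2 * sqrt (real d * ln (real d / \<beta>)))"
          using B4 sq B1 ep Lpos dpos by (intro mult_mono) (auto intro: mult_nonneg_nonneg)
        also have "\<dots> \<le> 3 * 4 * (5/3 * sqrt (real d * ln (real d / \<beta>)))"
        proof -
          have "0 \<le> ln (real d / \<beta>)" using db2 by simp
          then show ?thesis using s2 dpos by (intro mult_left_mono mult_right_mono) auto
        qed
        also have "\<dots> = 20 * sqrt (real d * ln (real d / \<beta>))" by simp
        finally have X: "3 * B * sqrt (real d * L) * (eps + 2 * del) \<le> 20 * sqrt (real d * ln (real d / \<beta>))" .
        have "3 * B * sqrt (real d * L) \<le> 20 * sqrt (real d * ln (real d / \<beta>)) / (eps + 2 * del)"
          using X ep by (simp add: pos_le_divide_eq)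
        then have "3 * B * sqrt (real d * L) / sqrt (real N)
            \<le> 20 * sqrt (real d * ln (real d / \<beta>)) / (eps + 2 * del) / sqrt (real N)"
          by (rule divide_right_mono) simp
        then show ?thesis by (simp add: divide_divide_eq_left)
      qed
      finally show ?thesis unfolding bound_def .
    qed
    have good: "- Bad \<subseteq> {xs. Max ((\<lambda>j. \<bar>(\<Sum>i=1..N. xs i j) / real N - (\<Sum>i=1..N. x i j) / real N\<bar>) ` {1..d}) \<le> bound}"
    proof
      fix xs assume xs: "xs \<in> - Bad"
      have "\<bar>(\<Sum>i=1..N. xs i j) / real N - (\<Sum>i=1..N. x i j) / real N\<bar> \<le> bound" if j: "j \<in> {1..d}" for j
      proof -
        have "\<not> lam * T \<le> (1 * lam) * S xs j" "\<not> lam * T \<le> (-1 * lam) * S xs j"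
          using xs j unfolding Bad_def by auto
        then have h: "\<not> lam * T \<le> lam * S xs j" "\<not> lam * T \<le> lam * (- S xs j)" by simp_all
        have "S xs j < T" using h(1) lam0 by (simp add: mult_le_cancel_left_pos)
        moreover have "- S xs j < T" using h(2) lam0 by (simp only: mult_le_cancel_left_pos)
        ultimately have "\<bar>S xs j\<bar> < T" by (simp add: abs_less_iff)
        moreover have "(\<Sum>i=1..N. xs i j) / real N - (\<Sum>i=1..N. x i j) / real N = S xs j / real N"
          by (simp add: S_def sum_subtractf diff_divide_distrib)
        ultimately have "\<bar>(\<Sum>i=1..N. xs i j) / real N - (\<Sum>i=1..N. x i j) / real N\<bar> \<le> T / real N"
          using Npos by (simp add: divide_right_mono)
        then show ?thesis using Tb by linarith
      qed
      then show "xs \<in> {xs. Max ((\<lambda>j. \<bar>(\<Sum>i=1..N. xs i j) / real N - (\<Sum>i=1..N. x i j) / real N\<bar>) ` {1..d}) \<le> bound}"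
        using d by (auto simp: Max_le_iff)
    qed
    have "1 - \<beta> \<le> 1 - measure_pmf.prob M Bad" using probBad by simp
    also have "\<dots> = measure_pmf.prob M (- Bad)"
      using measure_pmf.prob_compl[of Bad M] by (simp add: Compl_eq_Diff_UNIV)
    also have "\<dots> \<le> measure_pmf.prob M {xs. Max ((\<lambda>j. \<bar>(\<Sum>i=1..N. xs i j) / real N - (\<Sum>i=1..N. x i j) / real N\<bar>) ` {1..d}) \<le> bound}"
      by (rule measure_pmf.finite_measure_mono[OF good]) simp
    finally show "1 - \<beta> \<le> measure_pmf.prob (alg3_all eps del d N x)
         {xs. Max ((\<lambda>j. \<bar>(\<Sum>i=1..N. xs i j) / real N - (\<Sum>i=1..N. x i j) / real N\<bar>) ` {1..d})
                \<le> 20 * sqrt (real d * ln (real d / \<beta>)) / ((eps + 2 * del) * sqrt (real N))}"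
      unfolding M_def bound_def .
  qed
qed

end
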